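(* Let $\varphi$ be a rational function of degree $n$ which is univalent on a neighborhood of $\overline{\mathbb D}$, let $\Omega:=\varphi(\mathbb D)$ and $\Gamma:=\partial\Omega=\varphi(\partial\mathbb D)$. For $t\in\widehat{\mathbb C}$ let $\{R(t)\}$ denote the collection $\{\varphi(1/\bar\zeta):\zeta\in\widehat{\mathbb C},\ \varphi(\zeta)=t\}$ (with $1/\bar 0=\infty$, $1/\bar\infty=0$), and let $B$ be the finite set of $t\in\widehat{\mathbb C}$ for which $\varphi(\zeta)=t$ has fewer than $n$ distinct solutions. Then: (i) if $t\in\widehat{\mathbb C}\setminus(\overline\Omega\cup B)$, then $\{R(t)\}\subset\Omega$; (ii) if $t\in\Gamma\setminus B$, then exactly one point of $\{R(t)\}$, namely $t$ itself, lies on $\Gamma$, and the remaining $n-1$ points lie in $\Omega$.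
   Context: $\mathbb D$ is the open unit disk. The degree of $\varphi=p/q$ ($p,q$ polynomials without common zeros) is $\max(\deg p,\deg q)$. $\{R(t)\}$ is the set of values at $t$ of the multivalued anticonformal reflection $R=\overline S$ of $\Gamma$, where the Schwarz function $S$ of $\Gamma$ satisfies $S(\varphi(\zeta))=\overline{\varphi(1/\bar\zeta)}$; in particular $R(\zeta)=\zeta$ on $\Gamma$ for the principal branch. *)

theory Defs
  imports "HOL-Analysis.Analysis" "HOL-Computational_Algebra.Polynomial"
begin

text \<open>The Riemann sphere: \<open>None\<close> is the point at infinity.\<close>
type_synonym ecomplex = "complex option"

text \<open>A rational function \<open>p/q\<close> (p, q without common zeros, q nonzero) on the sphere.\<close>
definition rat_fun :: "complex poly \<Rightarrow> complex poly \<Rightarrow> ecomplex \<Rightarrow> ecomplex" where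
  "rat_fun p q z = (case z of
      Some w \<Rightarrow> (if poly q w = 0 then None else Some (poly p w / poly q w))
    | None \<Rightarrow> (if degree p > degree q then None
              else if degree p = degree q then Some (lead_coeff p / lead_coeff q)
              else Some 0))"

definition rat_degree :: "complex poly \<Rightarrow> complex poly \<Rightarrow> nat" where
  "rat_degree p q = max (degree p) (degree q)"

definition sphere_reflect :: "ecomplex \<Rightarrow> ecomplex" where
  "sphere_reflect z = (case z of
      None \<Rightarrow> Some 0
    | Some w \<Rightarrow> (if w = 0 then None else Some (1 / cnj w)))"

definition branch_values :: "complex poly \<Rightarrow> complex poly \<Rightarrow> ecomplex set" where
  "branch_values p q = {t. card {\<zeta>. rat_fun p q \<zeta> = t} < rat_degree p q}"

end

theory Submission
  imports Defs
begin


lemma rf_some: "poly q z \<noteq> 0 \<Longrightarrow> rat_fun p q (Some z) = Some (poly p z / poly q z)"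
  by (simp add: rat_fun_def)

lemma refl_cases:
  "(\<exists>z. \<zeta> = Some z \<and> cmod z \<le> 1) \<or> (\<exists>y. sphere_reflect \<zeta> = Some y \<and> cmod y < 1)"
proof (cases \<zeta>)
  case None then show ?thesis by (simp add: sphere_reflect_def)
next
  case (Some z)
  show ?thesis
  proof (cases "cmod z \<le> 1")
    case True then show ?thesis using Some by auto
  next
    case False
    then have "z \<noteq> 0" by auto
    then have "sphere_reflect \<zeta> = Some (1 / cnj z)" using Some by (simp add: sphere_reflect_def)
    moreover have "cmod (1 / cnj z) < 1" using False by (simp add: norm_divide divide_less_eq)
    ultimately show ?thesis by blast
  qed
qed

lemma refl_unit: "cmod z = 1 \<Longrightarrow> sphere_reflect (Some z) = Some z"
proof -
  assume h: "cmod z = 1"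
  then have z0: "z \<noteq> 0" by auto
  have "z * cnj z = 1" using complex_norm_square[of z] h by simp
  then have "1 / cnj z = z" using z0 by (simp add: field_simps)
  then show ?thesis using z0 by (simp add: sphere_reflect_def)
qed

theorem lemma3p12:
  fixes p q :: "complex poly" and U :: "complex set"
  defines "\<phi> \<equiv> (\<lambda>z. poly p z / poly q z)"
  defines "n \<equiv> rat_degree p q"
  defines "\<Omega> \<equiv> \<phi> ` ball 0 1"
  defines "\<Gamma> \<equiv> \<phi> ` sphere 0 1"
  defines "B \<equiv> branch_values p q"
  assumes q_nz: "q \<noteq> 0"
    and coprime: "\<And>z. \<not> (poly p z = 0 \<and> poly q z = 0)"
    and U_open: "open U" and U_sup: "cball 0 1 \<subseteq> U"
    and no_poles: "\<And>z. z \<in> U \<Longrightarrow> poly q z \<noteq> 0"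
    and univalent: "inj_on \<phi> U"
  shows
    "(\<forall>t. t \<notin> Some ` closure \<Omega> \<and> t \<notin> B \<longrightarrow>
        (\<forall>\<zeta>. rat_fun p q \<zeta> = t \<longrightarrow> rat_fun p q (sphere_reflect \<zeta>) \<in> Some ` \<Omega>))
     \<and>
     (\<forall>w \<in> \<Gamma>. Some w \<notin> B \<longrightarrow>
        card {\<zeta>. rat_fun p q \<zeta> = Some w} = n \<and>
        (\<exists>!\<zeta>. rat_fun p q \<zeta> = Some w \<and> rat_fun p q (sphere_reflect \<zeta>) \<in> Some ` \<Gamma>) \<and>
        (\<forall>\<zeta>. rat_fun p q \<zeta> = Some w \<and> rat_fun p q (sphere_reflect \<zeta>) \<in> Some ` \<Gamma>
              \<longrightarrow> rat_fun p q (sphere_reflect \<zeta>) = Some w) \<and>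
        (\<forall>\<zeta>. rat_fun p q \<zeta> = Some w \<and> rat_fun p q (sphere_reflect \<zeta>) \<notin> Some ` \<Gamma>
              \<longrightarrow> rat_fun p q (sphere_reflect \<zeta>) \<in> Some ` \<Omega>))"
  proof -
  have inU: "\<And>z. cmod z \<le> 1 \<Longrightarrow> z \<in> U" using U_sup by auto
  have rf: "\<And>z. z \<in> U \<Longrightarrow> rat_fun p q (Some z) = Some (\<phi> z)"
    using no_poles rf_some \<phi>_def by simp
  have disj: "\<And>a b. cmod a < 1 \<Longrightarrow> cmod b = 1 \<Longrightarrow> \<phi> a = \<phi> b \<Longrightarrow> False"
  proof -
    fix a b :: complex assume "cmod a < 1" "cmod b = 1" "\<phi> a = \<phi> b"
    then have "a = b" using univalent inU by (auto simp: inj_on_def)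
    then show False using \<open>cmod a < 1\<close> \<open>cmod b = 1\<close> by simp
  qed
  have cont: "continuous_on (closure (ball 0 1)) \<phi>"
  proof -
    have "continuous_on (cball 0 1) (\<lambda>z. poly p z / poly q z)"
      by (intro continuous_intros) (use no_poles inU in auto)
    then show ?thesis by (simp add: \<phi>_def)
  qed
  have clos: "\<And>z. cmod z \<le> 1 \<Longrightarrow> \<phi> z \<in> closure \<Omega>"
  proof -
    fix z :: complex assume "cmod z \<le> 1"
    have "\<phi> ` closure (ball 0 1) \<subseteq> closure \<Omega>"
      by (rule image_closure_subset[OF cont]) (auto simp: \<Omega>_def intro: closure_subset[THEN subsetD])
    then show "\<phi> z \<in> closure \<Omega>" using \<open>cmod z \<le> 1\<close> by auto
  qed
  have part1: "\<forall>t. t \<notin> Some ` closure \<Omega> \<and> t \<notin> B \<longrightarrow>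
        (\<forall>\<zeta>. rat_fun p q \<zeta> = t \<longrightarrow> rat_fun p q (sphere_reflect \<zeta>) \<in> Some ` \<Omega>)"
  proof (intro allI impI)
    fix t \<zeta> assume t: "t \<notin> Some ` closure \<Omega> \<and> t \<notin> B" and e: "rat_fun p q \<zeta> = t"
    from refl_cases[of \<zeta>] show "rat_fun p q (sphere_reflect \<zeta>) \<in> Some ` \<Omega>"
    proof
      assume "\<exists>z. \<zeta> = Some z \<and> cmod z \<le> 1"
      then obtain z where "\<zeta> = Some z" "cmod z \<le> 1" by blast
      then have "t = Some (\<phi> z)" using e rf inU by simp
      then show ?thesis using t clos \<open>cmod z \<le> 1\<close> by auto
    next
      assume "\<exists>y. sphere_reflect \<zeta> = Some y \<and> cmod y < 1"
      then obtain y where "sphere_reflect \<zeta> = Some y" "cmod y < 1" by blast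
      then show ?thesis using rf inU by (auto simp: \<Omega>_def)
    qed
  qed
  have part2: "\<forall>w \<in> \<Gamma>. Some w \<notin> B \<longrightarrow>
        card {\<zeta>. rat_fun p q \<zeta> = Some w} = n \<and>
        (\<exists>!\<zeta>. rat_fun p q \<zeta> = Some w \<and> rat_fun p q (sphere_reflect \<zeta>) \<in> Some ` \<Gamma>) \<and>
        (\<forall>\<zeta>. rat_fun p q \<zeta> = Some w \<and> rat_fun p q (sphere_reflect \<zeta>) \<in> Some ` \<Gamma>
              \<longrightarrow> rat_fun p q (sphere_reflect \<zeta>) = Some w) \<and>
        (\<forall>\<zeta>. rat_fun p q \<zeta> = Some w \<and> rat_fun p q (sphere_reflect \<zeta>) \<notin> Some ` \<Gamma>
              \<longrightarrow> rat_fun p q (sphere_reflect \<zeta>) \<in> Some ` \<Omega>)"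
  proof (intro ballI impI)
    fix w assume "w \<in> \<Gamma>" and wB: "Some w \<notin> B"
    then obtain z0 where z0: "cmod z0 = 1" "w = \<phi> z0" by (auto simp: \<Gamma>_def)
    have key: "\<And>\<zeta>. rat_fun p q \<zeta> = Some w \<Longrightarrow>
        \<zeta> = Some z0 \<or> (\<exists>y. sphere_reflect \<zeta> = Some y \<and> cmod y < 1)"
    proof -
      fix \<zeta> assume e: "rat_fun p q \<zeta> = Some w"
      from refl_cases[of \<zeta>] show "\<zeta> = Some z0 \<or> (\<exists>y. sphere_reflect \<zeta> = Some y \<and> cmod y < 1)"
      proof
        assume "\<exists>z. \<zeta> = Some z \<and> cmod z \<le> 1"
        then obtain z where z: "\<zeta> = Some z" "cmod z \<le> 1" by blast
        then have "\<phi> z = \<phi> z0" using e rf inU z0 by simp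
        then have "z = z0" using univalent inU z z0 by (auto simp: inj_on_def)
        then show ?thesis using z by simp
      qed simp
    qed
    have z0r: "rat_fun p q (sphere_reflect (Some z0)) = Some w"
      using refl_unit[OF z0(1)] rf inU z0 by simp
    have z0e: "rat_fun p q (Some z0) = Some w" using rf inU z0 by simp
    have wG: "Some w \<in> Some ` \<Gamma>" using \<open>w \<in> \<Gamma>\<close> by simp
    have other: "\<And>\<zeta> y. sphere_reflect \<zeta> = Some y \<Longrightarrow> cmod y < 1 \<Longrightarrow>
        rat_fun p q (sphere_reflect \<zeta>) \<in> Some ` \<Omega> \<and> rat_fun p q (sphere_reflect \<zeta>) \<notin> Some ` \<Gamma>"
    proof -
      fix \<zeta> y assume a: "sphere_reflect \<zeta> = Some y" "cmod y < 1"
      have "rat_fun p q (sphere_reflect \<zeta>) = Some (\<phi> y)" using a rf inU by simp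
      moreover have "\<phi> y \<notin> \<Gamma>" using disj a(2) by (auto simp: \<Gamma>_def)
      ultimately show "rat_fun p q (sphere_reflect \<zeta>) \<in> Some ` \<Omega> \<and> rat_fun p q (sphere_reflect \<zeta>) \<notin> Some ` \<Gamma>"
        using a by (auto simp: \<Omega>_def)
    qed
    have uniq: "\<And>\<zeta>. rat_fun p q \<zeta> = Some w \<Longrightarrow> rat_fun p q (sphere_reflect \<zeta>) \<in> Some ` \<Gamma> \<Longrightarrow> \<zeta> = Some z0"
      using key other by blast
    have card: "card {\<zeta>. rat_fun p q \<zeta> = Some w} = n"
    proof -
      let ?S = "{\<zeta>. rat_fun p q \<zeta> = Some w}"
      define r where "r = p - smult w q"
      have r0: "r \<noteq> 0"
      proof
        assume "r = 0"
        then have pq: "p = smult w q" by (simp add: r_def)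
        have "0 \<in> U" "1/2 \<in> U" using inU by auto
        then have "\<phi> 0 = w" "\<phi> (1/2) = w" using pq no_poles by (auto simp: \<phi>_def)
        then have "\<phi> 0 = \<phi> (1/2)" by simp
        then have "(0::complex) = 1/2" using univalent \<open>0 \<in> U\<close> \<open>1/2 \<in> U\<close> inj_onD by metis
        then show False by simp
      qed
      have degr: "degree r \<le> n"
      proof -
        have "degree r \<le> max (degree p) (degree (smult w q))" unfolding r_def by (rule degree_diff_le_max)
        also have "\<dots> \<le> max (degree p) (degree q)" using degree_smult_le[of w q] by simp
        finally show ?thesis by (simp add: n_def rat_degree_def)
      qed
      have sub: "?S \<subseteq> Some ` {x. poly r x = 0} \<union> (if None \<in> ?S then {None} else {})"
      proof
        fix \<zeta> assume "\<zeta> \<in> ?S"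
        then have e: "rat_fun p q \<zeta> = Some w" by simp
        show "\<zeta> \<in> Some ` {x. poly r x = 0} \<union> (if None \<in> ?S then {None} else {})"
        proof (cases \<zeta>)
          case None then show ?thesis using e by simp
        next
          case (Some x)
          have "poly q x \<noteq> 0" using e Some by (auto simp: rat_fun_def split: if_splits)
          then have "poly p x / poly q x = w" using e Some by (simp add: rat_fun_def)
          then have "poly r x = 0" using \<open>poly q x \<noteq> 0\<close> by (simp add: r_def field_simps)
          then show ?thesis using Some by auto
        qed
      qed
      have fin: "finite {x. poly r x = 0}" using poly_roots_finite[OF r0] .
      have cb: "card {x. poly r x = 0} \<le> degree r" using card_poly_roots_bound[OF r0] .
      have le: "card ?S \<le> n"
      proof (cases "None \<in> ?S")
        case False
        have "card ?S \<le> card (Some ` {x. poly r x = 0})"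
          using sub False fin by (intro card_mono) auto
        also have "\<dots> \<le> card {x. poly r x = 0}" by (rule card_image_le[OF fin])
        finally show ?thesis using cb degr by simp
      next
        case True
        then have eN: "rat_fun p q None = Some w" by simp
        have dlt: "degree r < n"
        proof (cases "degree p = degree q")
          case True
          then have w: "w = lead_coeff p / lead_coeff q" using eN by (simp add: rat_fun_def)
          have lq: "lead_coeff q \<noteq> 0" using q_nz by simp
          have "coeff r n = 0"
            using True w lq by (simp add: r_def n_def rat_degree_def)
          moreover have "degree r \<noteq> n \<or> degree r = 0"
            using \<open>coeff r n = 0\<close> r0 by (metis leading_coeff_0_iff)
          moreover have "degree r = 0 \<Longrightarrow> n \<noteq> 0"
            using \<open>coeff r n = 0\<close> r0 by (metis leading_coeff_0_iff)
          ultimately show ?thesis using degr by linarith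
        next
          case False
          then have "degree p < degree q" "w = 0" using eN by (auto simp: rat_fun_def split: if_splits)
          then show ?thesis by (simp add: r_def n_def rat_degree_def)
        qed
        have "card ?S \<le> card (Some ` {x. poly r x = 0} \<union> {None})"
          using sub True fin by (intro card_mono) auto
        also have "\<dots> \<le> card (Some ` {x. poly r x = 0}) + card {None::complex option}" using card_Un_le by blast
        also have "\<dots> \<le> card {x. poly r x = 0} + 1" using card_image_le[OF fin] by simp
        finally show ?thesis using cb dlt by simp
      qed
      have "\<not> card ?S < n" using wB by (simp add: B_def branch_values_def n_def)
      then show ?thesis using le by simp
    qed
    show "card {\<zeta>. rat_fun p q \<zeta> = Some w} = n \<and>
        (\<exists>!\<zeta>. rat_fun p q \<zeta> = Some w \<and> rat_fun p q (sphere_reflect \<zeta>) \<in> Some ` \<Gamma>) \<and>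
        (\<forall>\<zeta>. rat_fun p q \<zeta> = Some w \<and> rat_fun p q (sphere_reflect \<zeta>) \<in> Some ` \<Gamma>
              \<longrightarrow> rat_fun p q (sphere_reflect \<zeta>) = Some w) \<and>
        (\<forall>\<zeta>. rat_fun p q \<zeta> = Some w \<and> rat_fun p q (sphere_reflect \<zeta>) \<notin> Some ` \<Gamma>
              \<longrightarrow> rat_fun p q (sphere_reflect \<zeta>) \<in> Some ` \<Omega>)"
    proof (intro conjI allI impI)
      show "card {\<zeta>. rat_fun p q \<zeta> = Some w} = n" by (rule card)
      show "\<exists>!\<zeta>. rat_fun p q \<zeta> = Some w \<and> rat_fun p q (sphere_reflect \<zeta>) \<in> Some ` \<Gamma>"
        using z0e z0r wG uniq by metis
    next
      fix \<zeta> assume "rat_fun p q \<zeta> = Some w \<and> rat_fun p q (sphere_reflect \<zeta>) \<in> Some ` \<Gamma>"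
      then show "rat_fun p q (sphere_reflect \<zeta>) = Some w" using uniq z0r by blast
    next
      fix \<zeta> assume a: "rat_fun p q \<zeta> = Some w \<and> rat_fun p q (sphere_reflect \<zeta>) \<notin> Some ` \<Gamma>"
      then have "\<zeta> \<noteq> Some z0" using z0r wG by auto
      then show "rat_fun p q (sphere_reflect \<zeta>) \<in> Some ` \<Omega>" using key a other by blast
    qed
  qed
  show ?thesis using part1 part2 by blast
qed

end
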